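(* Let $\{\mathbb{P}_{s,t}\in\mathcal{Q}:0\le s\le t\}$ be a quadratic harness with parameters $\eta,\theta,\sigma,\tau,\gamma$, and let $\mathbb{A}_t$ ($t>0$) be its infinitesimal generator. For $t>0$ put $$\mathbb{H}_t=\mathbb{A}_t\mathbb{F}-\mathbb{F}\mathbb{A}_t,\qquad \mathbb{T}_t=\mathbb{F}-t\mathbb{H}_t .$$ Then $$\mathbb{H}_t\mathbb{T}_t-\gamma\,\mathbb{T}_t\mathbb{H}_t=\mathbb{E}+\theta\mathbb{H}_t+\eta\mathbb{T}_t+\tau\mathbb{H}_t^{2}+\sigma\mathbb{T}_t^{2}.$$
   Context: $\mathcal{Q}$ denotes the real linear space of all infinite sequences $\mathbb{P}=(p_0,p_1,p_2,\dots)$ of real polynomials in one variable $x$, equipped with the product $\mathbb{P}\mathbb{Q}=\mathbb{R}=(r_0,r_1,\dots)$, where for $\mathbb{Q}=(q_0,q_1,\dots)$ one sets $r_k(x)=\sum_{j=0}^{\deg q_k}[q_k]_j\,p_j(x)$, and $[q]_j$ denotes the coefficient of $x^j$ in $q$. (Equivalently, identifying a linear map $\mathsf{P}$ of the polynomial space with the sequence $(\mathsf{P}(1),\mathsf{P}(x),\mathsf{P}(x^2),\dots)$, the product corresponds to composition $\mathsf{P}\circ\mathsf{Q}$.) Powers are taken with respect to this product. Special elements: $\mathbb{E}=(1,x,x^2,\dots)$ (the identity), $\mathbb{F}=(x,x^2,x^3,\dots)$, $\mathbb{D}=(0,1,x,x^2,\dots)$. A polynomial process is a family $\{\mathbb{P}_{s,t}\in\mathcal{Q}:0\le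 s\le t\}$ such that: (i) for all $0\le s\le t$ and $n\ge0$ the $n$-th component of $\mathbb{P}_{s,t}$ is a polynomial of degree exactly $n$; (ii) $\mathbb{P}_{s,t}(\mathbb{E}-\mathbb{F}\mathbb{D})=\mathbb{E}-\mathbb{F}\mathbb{D}$; (iii) $\mathbb{P}_{s,t}\mathbb{P}_{t,u}=\mathbb{P}_{s,u}$ for $0\le s\le t\le u$. Given real numbers $\eta,\theta,\sigma,\tau,\gamma$, a polynomial process is a quadratic harness with parameters $\eta,\theta,\sigma,\tau,\gamma$ if: (a) $\mathbb{P}_{s,t}(\mathbb{F}\mathbb{D}-\mathbb{F}^2\mathbb{D}^2)=\mathbb{F}\mathbb{D}-\mathbb{F}^2\mathbb{D}^2$ for all $0\le s\le t$; (b) there is $\mathbb{X}\in\mathcal{Q}$ with $\mathbb{P}_{0,t}\mathbb{F}=(\mathbb{F}+t\mathbb{X})\mathbb{P}_{0,t}$ for all $t\ge0$; (c) this $\mathbb{X}$ satisfies $\mathbb{X}\mathbb{F}-\gamma\mathbb{F}\mathbb{X}=\mathbb{E}+\eta\mathbb{F}+\theta\mathbb{X}+\sigma\mathbb{F}^2+\tau\mathbb{X}^2$. The infinitesimal generator is $\mathbb{A}_t=\lim_{h\to0^+}\frac1h(\mathbb{P}_{t-h,t}-\mathbb{E})\in\mathcal{Q}$, $t>0$, the limit taken coefficientwise in each component (it exists for such processes). *)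

theory Defs
  imports Complex_Main "HOL-Computational_Algebra.Polynomial"
begin

type_synonym qseq = "nat \<Rightarrow> real poly"

definition qmul :: "qseq \<Rightarrow> qseq \<Rightarrow> qseq" (infixl "\<cdot>\<^sub>Q" 70) where
  "qmul P Q = (\<lambda>k. \<Sum>j\<le>degree (Q k). smult (coeff (Q k) j) (P j))"

definition qadd :: "qseq \<Rightarrow> qseq \<Rightarrow> qseq" (infixl "+\<^sub>Q" 65) where
  "qadd P Q = (\<lambda>k. P k + Q k)"

definition qsub :: "qseq \<Rightarrow> qseq \<Rightarrow> qseq" (infixl "-\<^sub>Q" 65) where
  "qsub P Q = (\<lambda>k. P k - Q k)"

definition qscale :: "real \<Rightarrow> qseq \<Rightarrow> qseq" (infixr "*\<^sub>Q" 75) where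
  "qscale c P = (\<lambda>k. smult c (P k))"

definition qE :: qseq where "qE = (\<lambda>n. monom 1 n)"
definition qF :: qseq where "qF = (\<lambda>n. monom 1 (Suc n))"
definition qD :: qseq where "qD = (\<lambda>n. if n = 0 then 0 else monom 1 (n - 1))"

definition polynomial_process :: "(real \<Rightarrow> real \<Rightarrow> qseq) \<Rightarrow> bool" where
  "polynomial_process P \<longleftrightarrow>
     (\<forall>s t n. 0 \<le> s \<and> s \<le> t \<longrightarrow> degree (P s t n) = n \<and> coeff (P s t n) n \<noteq> 0) \<and>
     (\<forall>s t. 0 \<le> s \<and> s \<le> t \<longrightarrow> P s t \<cdot>\<^sub>Q (qE -\<^sub>Q qF \<cdot>\<^sub>Q qD) = qE -\<^sub>Q qF \<cdot>\<^sub>Q qD) \<and>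
     (\<forall>s t u. 0 \<le> s \<and> s \<le> t \<and> t \<le> u \<longrightarrow> P s t \<cdot>\<^sub>Q P t u = P s u)"

definition quadratic_harness ::
  "(real \<Rightarrow> real \<Rightarrow> qseq) \<Rightarrow> real \<Rightarrow> real \<Rightarrow> real \<Rightarrow> real \<Rightarrow> real \<Rightarrow> bool" where
  "quadratic_harness P \<eta> \<theta> \<sigma> \<tau> \<gamma> \<longleftrightarrow>
     polynomial_process P \<and>
     (\<forall>s t. 0 \<le> s \<and> s \<le> t \<longrightarrow>
        P s t \<cdot>\<^sub>Q (qF \<cdot>\<^sub>Q qD -\<^sub>Q qF \<cdot>\<^sub>Q qF \<cdot>\<^sub>Q qD \<cdot>\<^sub>Q qD) = qF \<cdot>\<^sub>Q qD -\<^sub>Q qF \<cdot>\<^sub>Q qF \<cdot>\<^sub>Q qD \<cdot>\<^sub>Q qD) \<and>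
     (\<exists>X. (\<forall>t\<ge>0. P 0 t \<cdot>\<^sub>Q qF = (qF +\<^sub>Q t *\<^sub>Q X) \<cdot>\<^sub>Q P 0 t) \<and>
          X \<cdot>\<^sub>Q qF -\<^sub>Q \<gamma> *\<^sub>Q (qF \<cdot>\<^sub>Q X) =
            qE +\<^sub>Q \<eta> *\<^sub>Q qF +\<^sub>Q \<theta> *\<^sub>Q X +\<^sub>Q \<sigma> *\<^sub>Q (qF \<cdot>\<^sub>Q qF) +\<^sub>Q \<tau> *\<^sub>Q (X \<cdot>\<^sub>Q X))"

definition is_generator :: "(real \<Rightarrow> real \<Rightarrow> qseq) \<Rightarrow> (real \<Rightarrow> qseq) \<Rightarrow> bool" where
  "is_generator P A \<longleftrightarrow>
     (\<forall>t>0. \<forall>n j. ((\<lambda>h. coeff (P (t - h) t n - qE n) j / h) \<longlongrightarrow> coeff (A t n) j) (at_right 0))"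

end

theory Submission
  imports Defs
begin

lemma smult_sum_right: "smult c (\<Sum>i\<in>S. f i) = (\<Sum>i\<in>S. smult c (f i))"
  by (induct S rule: infinite_finite_induct) (auto simp: smult_add_right)

definition qapp :: "qseq \<Rightarrow> real poly \<Rightarrow> real poly" where
  "qapp P p = (\<Sum>j\<le>degree p. smult (coeff p j) (P j))"

lemma qmul_qapp: "(P \<cdot>\<^sub>Q Q) k = qapp P (Q k)"
  by (simp add: qmul_def qapp_def)

lemma qapp_bound:
  assumes "degree p \<le> N"
  shows "qapp P p = (\<Sum>j\<le>N. smult (coeff p j) (P j))"
proof -
  have "(\<Sum>j\<le>N. smult (coeff p j) (P j)) = (\<Sum>j\<le>degree p. smult (coeff p j) (P j))"
    by (rule sum.mono_neutral_right) (use assms in \<open>auto simp: coeff_eq_0\<close>)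
  then show ?thesis by (simp add: qapp_def)
qed

lemma qapp_add: "qapp P (p + q) = qapp P p + qapp P q"
proof -
  let ?N = "max (degree p) (degree q)"
  have d: "degree (p+q) \<le> ?N" by (rule degree_add_le) auto
  show ?thesis
    by (simp add: qapp_bound[OF d] qapp_bound[of p ?N] qapp_bound[of q ?N] sum.distrib smult_add_left)
qed

lemma qapp_smult: "qapp P (smult c p) = smult c (qapp P p)"
proof -
  have d: "degree (smult c p) \<le> degree p" by (rule degree_smult_le)
  show ?thesis
    by (simp add: qapp_bound[OF d] qapp_def smult_sum_right)
qed

lemma qapp_0: "qapp P 0 = 0"
  by (simp add: qapp_def)

lemma qapp_diff: "qapp P (p - q) = qapp P p - qapp P q"
proof -
  have "qapp P p = qapp P ((p - q) + q)" by simp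
  also have "\<dots> = qapp P (p - q) + qapp P q" by (rule qapp_add)
  finally show ?thesis by simp
qed

lemma qapp_sum: "qapp P (\<Sum>j\<in>S. f j) = (\<Sum>j\<in>S. qapp P (f j))"
  by (induct S rule: infinite_finite_induct) (auto simp: qapp_add qapp_0)

lemma qapp_left_add: "qapp (\<lambda>k. P k + Q k) p = qapp P p + qapp Q p"
  by (simp add: qapp_def sum.distrib smult_add_right)

lemma qapp_left_diff: "qapp (\<lambda>k. P k - Q k) p = qapp P p - qapp Q p"
  by (simp add: qapp_def sum_subtractf smult_diff_right)

lemma qapp_left_smult: "qapp (\<lambda>k. smult c (P k)) p = smult c (qapp P p)"
  by (simp add: qapp_def smult_sum_right mult.commute)

lemma qapp_monom: "qapp P (monom 1 n) = P n"
proof -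
  have "qapp P (monom 1 n) = (\<Sum>j\<le>n. if n = j then P j else 0)"
    unfolding qapp_def by (rule sum.cong) (auto simp: coeff_monom degree_monom_eq)
  then show ?thesis by simp
qed

lemma qapp_qE: "qapp qE p = p"
  by (simp add: qapp_def qE_def smult_monom poly_as_sum_of_monoms)

lemma qapp_qF: "qapp qF p = monom 1 1 * p"
proof -
  have "qapp qF p = (\<Sum>j\<le>degree p. monom 1 1 * monom (coeff p j) j)"
    by (simp add: qapp_def qF_def smult_monom mult_monom)
  also have "\<dots> = monom 1 1 * p"
    by (simp add: sum_distrib_left[symmetric] poly_as_sum_of_monoms)
  finally show ?thesis .
qed

lemma qapp_assoc: "qapp (P \<cdot>\<^sub>Q Q) p = qapp P (qapp Q p)"
  by (simp add: qapp_def[of "P \<cdot>\<^sub>Q Q"] qapp_def[of Q] qmul_qapp qapp_sum qapp_smult)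

lemma qmul_assoc: "(P \<cdot>\<^sub>Q Q) \<cdot>\<^sub>Q R = P \<cdot>\<^sub>Q (Q \<cdot>\<^sub>Q R)"
  by (simp add: fun_eq_iff qmul_qapp qapp_assoc)

lemma qmul_add_left: "(P +\<^sub>Q Q) \<cdot>\<^sub>Q R = P \<cdot>\<^sub>Q R +\<^sub>Q Q \<cdot>\<^sub>Q R"
  by (simp add: fun_eq_iff qmul_qapp qadd_def qapp_left_add)

lemma qmul_sub_left: "(P -\<^sub>Q Q) \<cdot>\<^sub>Q R = P \<cdot>\<^sub>Q R -\<^sub>Q Q \<cdot>\<^sub>Q R"
  by (simp add: fun_eq_iff qmul_qapp qsub_def qapp_left_diff)

lemma qmul_scale_left: "(c *\<^sub>Q P) \<cdot>\<^sub>Q R = c *\<^sub>Q (P \<cdot>\<^sub>Q R)"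
  by (simp add: fun_eq_iff qmul_qapp qscale_def qapp_left_smult)

lemma qmul_add_right: "P \<cdot>\<^sub>Q (Q +\<^sub>Q R) = P \<cdot>\<^sub>Q Q +\<^sub>Q P \<cdot>\<^sub>Q R"
  by (simp add: fun_eq_iff qmul_qapp qadd_def qapp_add)

lemma qmul_sub_right: "P \<cdot>\<^sub>Q (Q -\<^sub>Q R) = P \<cdot>\<^sub>Q Q -\<^sub>Q P \<cdot>\<^sub>Q R"
  by (simp add: fun_eq_iff qmul_qapp qsub_def qapp_diff)

lemma qmul_scale_right: "P \<cdot>\<^sub>Q (c *\<^sub>Q R) = c *\<^sub>Q (P \<cdot>\<^sub>Q R)"
  by (simp add: fun_eq_iff qmul_qapp qscale_def qapp_smult)

lemma qmul_E_left: "qE \<cdot>\<^sub>Q P = P"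
  by (simp add: fun_eq_iff qmul_qapp qapp_qE)

lemma qmul_E_right: "P \<cdot>\<^sub>Q qE = P"
  by (simp add: fun_eq_iff qmul_qapp qE_def qapp_monom)

lemma qapp_inj0:
  assumes Q: "\<And>n. degree (Q n) = n \<and> coeff (Q n) n \<noteq> 0"
    and z: "qapp Q p = 0"
  shows "p = 0"
proof (rule ccontr)
  assume "p \<noteq> 0"
  define d where "d = degree p"
  have cd: "coeff p d \<noteq> 0" using \<open>p \<noteq> 0\<close> by (simp add: d_def)
  have "coeff (qapp Q p) d = (\<Sum>j\<le>d. coeff p j * coeff (Q j) d)"
    by (simp add: qapp_def d_def coeff_sum)
  also have "\<dots> = coeff p d * coeff (Q d) d"
  proof (rule sum.mono_neutral_left[symmetric, of _ "{d}", simplified])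
    show "\<forall>i\<in>{..d} - {d}. coeff p i * coeff (Q i) d = 0"
      using Q by (auto intro!: coeff_eq_0 simp: le_less)
  qed auto
  finally have "coeff (qapp Q p) d \<noteq> 0" using cd Q[of d] by simp
  with z show False by simp
qed

lemma qmul_cancel:
  assumes Q: "\<And>n. degree (Q n) = n \<and> coeff (Q n) n \<noteq> 0"
    and e: "Q \<cdot>\<^sub>Q U = Q \<cdot>\<^sub>Q V"
  shows "U = V"
proof
  fix n
  have "qapp Q (U n - V n) = 0"
    using fun_cong[OF e, of n] by (simp add: qapp_diff qmul_qapp)
  then have "U n - V n = 0" by (rule qapp_inj0[OF Q])
  then show "U n = V n" by simp
qed


definition pconv :: "(real \<Rightarrow> real poly) \<Rightarrow> real poly \<Rightarrow> bool" where
  "pconv f L \<longleftrightarrow> (\<forall>k. ((\<lambda>h. coeff (f h) k) \<longlongrightarrow> coeff L k) (at_right 0))"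

lemma pconv_transform:
  assumes "pconv f L" "eventually (\<lambda>h. f h = g h) (at_right 0)"
  shows "pconv g L"
  unfolding pconv_def
proof
  fix k
  have "eventually (\<lambda>h. coeff (f h) k = coeff (g h) k) (at_right 0)"
    using assms(2) by (rule eventually_mono) simp
  moreover have "((\<lambda>h. coeff (f h) k) \<longlongrightarrow> coeff L k) (at_right 0)"
    using assms(1) unfolding pconv_def by simp
  ultimately show "((\<lambda>h. coeff (g h) k) \<longlongrightarrow> coeff L k) (at_right 0)"
    by (rule Lim_transform_eventually[rotated])
qed

lemma pconv_unique:
  assumes "pconv f L" "eventually (\<lambda>h. f h = c) (at_right 0)"
  shows "L = c"
proof (rule poly_eqI)
  fix k
  have "((\<lambda>h. coeff (f h) k) \<longlongrightarrow> coeff L k) (at_right 0)" using assms(1) by (simp add: pconv_def)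
  moreover have "((\<lambda>h. coeff (f h) k) \<longlongrightarrow> coeff c k) (at_right 0)"
  proof (rule Lim_transform_eventually[OF tendsto_const])
    show "\<forall>\<^sub>F x in at_right 0. coeff c k = coeff (f x) k"
      using assms(2) by (rule eventually_mono) simp
  qed
  ultimately show "coeff L k = coeff c k"
    by (rule tendsto_unique[OF trivial_limit_at_right_real])
qed

lemma pconv_degree:
  assumes "pconv f L" "eventually (\<lambda>h. degree (f h) \<le> N) (at_right 0)"
  shows "degree L \<le> N"
proof (rule degree_le, intro allI impI)
  fix k assume k: "N < k"
  have "((\<lambda>h. coeff (f h) k) \<longlongrightarrow> coeff L k) (at_right 0)" using assms(1) by (simp add: pconv_def)
  moreover have "((\<lambda>h. coeff (f h) k) \<longlongrightarrow> 0) (at_right 0)"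
  proof (rule Lim_transform_eventually[OF tendsto_const])
    show "\<forall>\<^sub>F x in at_right 0. 0 = coeff (f x) k"
      using assms(2) by (rule eventually_mono) (use k in \<open>simp add: coeff_eq_0\<close>)
  qed
  ultimately show "coeff L k = 0"
    by (rule tendsto_unique[OF trivial_limit_at_right_real])
qed

lemma pconv_qapp:
  assumes R: "\<And>j. pconv (\<lambda>h. R h j) (Q j)" and f: "pconv f L"
    and d: "eventually (\<lambda>h. degree (f h) \<le> N) (at_right 0)"
  shows "pconv (\<lambda>h. qapp (R h) (f h)) (qapp Q L)"
  unfolding pconv_def
proof
  fix k
  have dL: "degree L \<le> N" by (rule pconv_degree[OF f d])
  have lim: "((\<lambda>h. \<Sum>j\<le>N. coeff (f h) j * coeff (R h j) k) \<longlongrightarrow> (\<Sum>j\<le>N. coeff L j * coeff (Q j) k)) (at_right 0)"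
    using R f unfolding pconv_def by (intro tendsto_sum tendsto_mult) auto
  have e: "eventually (\<lambda>h. (\<Sum>j\<le>N. coeff (f h) j * coeff (R h j) k) = coeff (qapp (R h) (f h)) k) (at_right 0)"
  proof (rule eventually_mono[OF d])
    fix h assume a: "degree (f h) \<le> N"
    show "(\<Sum>j\<le>N. coeff (f h) j * coeff (R h j) k) = coeff (qapp (R h) (f h)) k"
      unfolding qapp_bound[OF a] coeff_sum by simp
  qed
  show "((\<lambda>h. coeff (qapp (R h) (f h)) k) \<longlongrightarrow> coeff (qapp Q L) k) (at_right 0)"
  proof -
    have eq: "coeff (qapp Q L) k = (\<Sum>j\<le>N. coeff L j * coeff (Q j) k)"
      unfolding qapp_bound[OF dL] coeff_sum by simp
    show ?thesis unfolding eq by (rule Lim_transform_eventually[OF lim e])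
  qed
qed

lemma pconv_diff:
  assumes "pconv f L" "pconv g M"
  shows "pconv (\<lambda>h. f h - g h) (L - M)"
  using assms unfolding pconv_def coeff_diff by (metis tendsto_diff)

lemma pconv_xmul:
  assumes "pconv f L"
  shows "pconv (\<lambda>h. monom 1 1 * f h) (monom 1 1 * L)"
  unfolding pconv_def
proof
  fix k
  show "((\<lambda>h. coeff (monom 1 1 * f h) k) \<longlongrightarrow> coeff (monom 1 1 * L) k) (at_right 0)"
  proof (cases k)
    case 0
    then show ?thesis unfolding coeff_monom_mult by simp
  next
    case (Suc m)
    have "((\<lambda>h. coeff (f h) m) \<longlongrightarrow> coeff L m) (at_right 0)"
      using assms unfolding pconv_def by blast
    then show ?thesis unfolding coeff_monom_mult Suc by simp
  qed
qed


lemma qcomm_eq: "(Y \<cdot>\<^sub>Q qF -\<^sub>Q qF \<cdot>\<^sub>Q Y) n = Y (Suc n) - monom 1 1 * Y n"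
  by (simp add: qsub_def qmul_qapp qapp_qF) (simp add: qF_def qapp_monom)

theorem theorem2p1:
  fixes P :: "real \<Rightarrow> real \<Rightarrow> qseq" and A :: "real \<Rightarrow> qseq"
    and \<eta> \<theta> \<sigma> \<tau> \<gamma> t :: real
  assumes "quadratic_harness P \<eta> \<theta> \<sigma> \<tau> \<gamma>"
    and "is_generator P A"
    and "t > 0"
  shows "let H = A t \<cdot>\<^sub>Q qF -\<^sub>Q qF \<cdot>\<^sub>Q A t;
             T = qF -\<^sub>Q t *\<^sub>Q H
         in H \<cdot>\<^sub>Q T -\<^sub>Q \<gamma> *\<^sub>Q (T \<cdot>\<^sub>Q H) =
            qE +\<^sub>Q \<theta> *\<^sub>Q H +\<^sub>Q \<eta> *\<^sub>Q T +\<^sub>Q \<tau> *\<^sub>Q (H \<cdot>\<^sub>Q H) +\<^sub>Q \<sigma> *\<^sub>Q (T \<cdot>\<^sub>Q T)"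
proof -
  have pp: "polynomial_process P"
    and hX: "\<exists>X. (\<forall>t\<ge>0. P 0 t \<cdot>\<^sub>Q qF = (qF +\<^sub>Q t *\<^sub>Q X) \<cdot>\<^sub>Q P 0 t) \<and>
          X \<cdot>\<^sub>Q qF -\<^sub>Q \<gamma> *\<^sub>Q (qF \<cdot>\<^sub>Q X) =
            qE +\<^sub>Q \<eta> *\<^sub>Q qF +\<^sub>Q \<theta> *\<^sub>Q X +\<^sub>Q \<sigma> *\<^sub>Q (qF \<cdot>\<^sub>Q qF) +\<^sub>Q \<tau> *\<^sub>Q (X \<cdot>\<^sub>Q X)"
    using assms(1) unfolding quadratic_harness_def by blast+
  then obtain X where hX1: "\<And>s. s \<ge> 0 \<Longrightarrow> P 0 s \<cdot>\<^sub>Q qF = (qF +\<^sub>Q s *\<^sub>Q X) \<cdot>\<^sub>Q P 0 s"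
    and hX2: "X \<cdot>\<^sub>Q qF -\<^sub>Q \<gamma> *\<^sub>Q (qF \<cdot>\<^sub>Q X) =
            qE +\<^sub>Q \<eta> *\<^sub>Q qF +\<^sub>Q \<theta> *\<^sub>Q X +\<^sub>Q \<sigma> *\<^sub>Q (qF \<cdot>\<^sub>Q qF) +\<^sub>Q \<tau> *\<^sub>Q (X \<cdot>\<^sub>Q X)"
    by blast
  have deg: "\<And>s u n. 0 \<le> s \<Longrightarrow> s \<le> u \<Longrightarrow> degree (P s u n) = n \<and> coeff (P s u n) n \<noteq> 0"
    using pp unfolding polynomial_process_def by blast
  have comp: "\<And>s u v. 0 \<le> s \<Longrightarrow> s \<le> u \<Longrightarrow> u \<le> v \<Longrightarrow> P s u \<cdot>\<^sub>Q P u v = P s v"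
    using pp unfolding polynomial_process_def by blast
  have gen: "\<And>n j. ((\<lambda>h. coeff (P (t - h) t n - qE n) j / h) \<longlongrightarrow> coeff (A t n) j) (at_right 0)"
    using assms(2,3) unfolding is_generator_def by blast
  define Q where "Q = P 0 t"
  define R where "R = (\<lambda>h. P 0 (t - h))"
  define B where "B = (\<lambda>h. P (t - h) t)"
  define C where "C = (\<lambda>h. (1/h) *\<^sub>Q (B h -\<^sub>Q qE))"
  define H where "H = A t \<cdot>\<^sub>Q qF -\<^sub>Q qF \<cdot>\<^sub>Q A t"
  define T where "T = qF -\<^sub>Q t *\<^sub>Q H"
  have ev: "eventually (\<lambda>h. 0 < h \<and> h < t) (at_right (0::real))"
    unfolding eventually_at_right_field using assms(3) by blast
  have degE: "degree (qE n) = n" for n by (simp add: qE_def degree_monom_eq)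
  have key: "R h \<cdot>\<^sub>Q (C h \<cdot>\<^sub>Q qF -\<^sub>Q qF \<cdot>\<^sub>Q C h) = X \<cdot>\<^sub>Q Q" if h: "0 < h" "h < t" for h
  proof -
    have QRB: "Q = R h \<cdot>\<^sub>Q B h" using comp[of 0 "t-h" t] h by (simp add: Q_def R_def B_def)
    have a1: "R h \<cdot>\<^sub>Q (B h \<cdot>\<^sub>Q qF) = qF \<cdot>\<^sub>Q Q +\<^sub>Q t *\<^sub>Q (X \<cdot>\<^sub>Q Q)"
    proof -
      have "R h \<cdot>\<^sub>Q (B h \<cdot>\<^sub>Q qF) = Q \<cdot>\<^sub>Q qF" by (simp add: QRB qmul_assoc)
      also have "\<dots> = (qF +\<^sub>Q t *\<^sub>Q X) \<cdot>\<^sub>Q Q" using hX1[of t] assms(3) by (simp add: Q_def)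
      finally show ?thesis by (simp add: qmul_add_left qmul_scale_left)
    qed
    have a2: "R h \<cdot>\<^sub>Q (qF \<cdot>\<^sub>Q B h) = qF \<cdot>\<^sub>Q Q +\<^sub>Q (t - h) *\<^sub>Q (X \<cdot>\<^sub>Q Q)"
    proof -
      have "R h \<cdot>\<^sub>Q (qF \<cdot>\<^sub>Q B h) = (R h \<cdot>\<^sub>Q qF) \<cdot>\<^sub>Q B h" by (simp add: qmul_assoc)
      also have "R h \<cdot>\<^sub>Q qF = (qF +\<^sub>Q (t-h) *\<^sub>Q X) \<cdot>\<^sub>Q R h" using hX1[of "t-h"] h by (simp add: R_def)
      finally show ?thesis by (simp add: qmul_add_left qmul_scale_left qmul_assoc QRB)
    qed
    have a3: "C h \<cdot>\<^sub>Q qF -\<^sub>Q qF \<cdot>\<^sub>Q C h = (1/h) *\<^sub>Q (B h \<cdot>\<^sub>Q qF -\<^sub>Q qF \<cdot>\<^sub>Q B h)"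
      unfolding C_def qmul_scale_left qmul_scale_right qmul_sub_left qmul_sub_right qmul_E_left qmul_E_right
      by (simp add: fun_eq_iff qscale_def qsub_def smult_diff_right)
    have "R h \<cdot>\<^sub>Q (C h \<cdot>\<^sub>Q qF -\<^sub>Q qF \<cdot>\<^sub>Q C h) = (1/h) *\<^sub>Q (R h \<cdot>\<^sub>Q (B h \<cdot>\<^sub>Q qF) -\<^sub>Q R h \<cdot>\<^sub>Q (qF \<cdot>\<^sub>Q B h))"
      unfolding a3 qmul_scale_right qmul_sub_right ..
    also have "\<dots> = X \<cdot>\<^sub>Q Q"
      unfolding a1 a2 using h by (simp add: fun_eq_iff qscale_def qsub_def qadd_def smult_diff_left)
    finally show ?thesis .
  qed
  have Cc: "pconv (\<lambda>h. C h n) (A t n)" for n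
    unfolding pconv_def
  proof
    fix j
    have "(\<lambda>h. coeff (C h n) j) = (\<lambda>h. coeff (P (t - h) t n - qE n) j / h)"
      by (simp add: fun_eq_iff C_def qscale_def qsub_def B_def)
    then show "((\<lambda>h. coeff (C h n) j) \<longlongrightarrow> coeff (A t n) j) (at_right 0)" using gen by simp
  qed
  have Cd: "eventually (\<lambda>h. degree (C h n) \<le> n) (at_right 0)" for n
  proof (rule eventually_mono[OF ev])
    fix h assume h: "0 < h \<and> h < t"
    have "degree (B h n - qE n) \<le> n"
      using deg[of "t-h" t n] h degE[of n] by (intro degree_diff_le) (auto simp: B_def)
    then show "degree (C h n) \<le> n"
      unfolding C_def qscale_def qsub_def using degree_smult_le order_trans by blast
  qed
  have Bc: "pconv (\<lambda>h. B h n) (qE n)" for n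
    unfolding pconv_def
  proof
    fix k
    have "((\<lambda>h. coeff (qE n) k + h * coeff (C h n) k) \<longlongrightarrow> coeff (qE n) k + 0 * coeff (A t n) k) (at_right 0)"
      using Cc[of n] unfolding pconv_def by (intro tendsto_add tendsto_mult tendsto_const tendsto_ident_at) auto
    moreover have "eventually (\<lambda>h. coeff (qE n) k + h * coeff (C h n) k = coeff (B h n) k) (at_right 0)"
      by (rule eventually_mono[OF ev]) (simp add: C_def qscale_def qsub_def)
    ultimately show "((\<lambda>h. coeff (B h n) k) \<longlongrightarrow> coeff (qE n) k) (at_right 0)"
      using Lim_transform_eventually by fastforce
  qed
  have Rc: "pconv (\<lambda>h. R h j) (Q j)" for j
  proof (induction j rule: less_induct)
    case (less j)
    show ?case unfolding pconv_def
    proof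
      fix k
      have lim: "((\<lambda>h. (coeff (Q j) k - (\<Sum>i<j. coeff (B h j) i * coeff (R h i) k)) / coeff (B h j) j)
          \<longlongrightarrow> (coeff (Q j) k - (\<Sum>i<j. coeff (qE j) i * coeff (Q i) k)) / coeff (qE j) j) (at_right 0)"
      proof -
        have nz: "coeff (qE j) j \<noteq> 0" by (simp add: qE_def)
        show ?thesis using less Bc nz unfolding pconv_def
          by (intro tendsto_divide tendsto_diff tendsto_sum tendsto_mult tendsto_const) auto
      qed
      have val: "(coeff (Q j) k - (\<Sum>i<j. coeff (qE j) i * coeff (Q i) k)) / coeff (qE j) j = coeff (Q j) k"
        by (simp add: qE_def coeff_monom)
      have e: "eventually (\<lambda>h. (coeff (Q j) k - (\<Sum>i<j. coeff (B h j) i * coeff (R h i) k)) / coeff (B h j) j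
          = coeff (R h j) k) (at_right 0)"
      proof (rule eventually_mono[OF ev])
        fix h assume h: "0 < h \<and> h < t"
        have dB: "degree (B h j) = j" and cB: "coeff (B h j) j \<noteq> 0"
          using deg[of "t-h" t j] h by (auto simp: B_def)
        have "Q j = (R h \<cdot>\<^sub>Q B h) j" using comp[of 0 "t-h" t] h by (simp add: Q_def R_def B_def)
        also have "\<dots> = (\<Sum>i\<in>insert j {..<j}. smult (coeff (B h j) i) (R h i))"
          unfolding qmul_qapp qapp_def dB by (rule sum.cong) auto
        also have "\<dots> = smult (coeff (B h j) j) (R h j) + (\<Sum>i<j. smult (coeff (B h j) i) (R h i))"
          by (simp add: sum.insert)
        finally have "coeff (Q j) k = coeff (B h j) j * coeff (R h j) k + (\<Sum>i<j. coeff (B h j) i * coeff (R h i) k)"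
          by (simp add: coeff_sum)
        then show "(coeff (Q j) k - (\<Sum>i<j. coeff (B h j) i * coeff (R h i) k)) / coeff (B h j) j
          = coeff (R h j) k" using cB by (simp add: field_simps)
      qed
      show "((\<lambda>h. coeff (R h j) k) \<longlongrightarrow> coeff (Q j) k) (at_right 0)"
        using Lim_transform_eventually[OF lim e] unfolding val .
    qed
  qed
  have Mc: "pconv (\<lambda>h. (C h \<cdot>\<^sub>Q qF -\<^sub>Q qF \<cdot>\<^sub>Q C h) n) (H n)" for n
    unfolding qcomm_eq H_def by (rule pconv_diff[OF Cc pconv_xmul[OF Cc]])
  have Md: "eventually (\<lambda>h. degree ((C h \<cdot>\<^sub>Q qF -\<^sub>Q qF \<cdot>\<^sub>Q C h) n) \<le> Suc n) (at_right 0)" for n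
  proof (rule eventually_mono[OF eventually_conj[OF Cd[of n] Cd[of "Suc n"]]])
    fix h assume h: "degree (C h n) \<le> n \<and> degree (C h (Suc n)) \<le> Suc n"
    have "degree (monom (1::real) 1 * C h n) \<le> Suc n"
      using degree_mult_le[of "monom (1::real) 1" "C h n"] h by (simp add: degree_monom_eq)
    then show "degree ((C h \<cdot>\<^sub>Q qF -\<^sub>Q qF \<cdot>\<^sub>Q C h) n) \<le> Suc n"
      unfolding qcomm_eq using h by (intro degree_diff_le) auto
  qed
  have QH: "Q \<cdot>\<^sub>Q H = X \<cdot>\<^sub>Q Q"
  proof
    fix n
    have c: "pconv (\<lambda>h. qapp (R h) ((C h \<cdot>\<^sub>Q qF -\<^sub>Q qF \<cdot>\<^sub>Q C h) n)) (qapp Q (H n))"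
      by (rule pconv_qapp[OF Rc Mc Md])
    have "eventually (\<lambda>h. qapp (R h) ((C h \<cdot>\<^sub>Q qF -\<^sub>Q qF \<cdot>\<^sub>Q C h) n) = (X \<cdot>\<^sub>Q Q) n) (at_right 0)"
    proof (rule eventually_mono[OF ev])
      fix h assume h: "0 < h \<and> h < t"
      show "qapp (R h) ((C h \<cdot>\<^sub>Q qF -\<^sub>Q qF \<cdot>\<^sub>Q C h) n) = (X \<cdot>\<^sub>Q Q) n"
        using fun_cong[OF key[of h], of n] h by (simp add: qmul_qapp)
    qed
    from pconv_unique[OF c this] show "(Q \<cdot>\<^sub>Q H) n = (X \<cdot>\<^sub>Q Q) n" by (simp add: qmul_qapp)
  qed
  have QT: "Q \<cdot>\<^sub>Q T = qF \<cdot>\<^sub>Q Q"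
  proof -
    have "Q \<cdot>\<^sub>Q T = Q \<cdot>\<^sub>Q qF -\<^sub>Q t *\<^sub>Q (X \<cdot>\<^sub>Q Q)"
      unfolding T_def qmul_sub_right qmul_scale_right QH ..
    also have "Q \<cdot>\<^sub>Q qF = qF \<cdot>\<^sub>Q Q +\<^sub>Q t *\<^sub>Q (X \<cdot>\<^sub>Q Q)"
      using hX1[of t] assms(3) by (simp add: Q_def qmul_add_left qmul_scale_left)
    finally show ?thesis by (simp add: fun_eq_iff qadd_def qsub_def)
  qed
  have QHY: "Q \<cdot>\<^sub>Q (H \<cdot>\<^sub>Q Y) = X \<cdot>\<^sub>Q (Q \<cdot>\<^sub>Q Y)" for Y
    by (simp add: qmul_assoc[symmetric] QH)
  have QTY: "Q \<cdot>\<^sub>Q (T \<cdot>\<^sub>Q Y) = qF \<cdot>\<^sub>Q (Q \<cdot>\<^sub>Q Y)" for Y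
    by (simp add: qmul_assoc[symmetric] QT)
  have L: "Q \<cdot>\<^sub>Q (H \<cdot>\<^sub>Q T -\<^sub>Q \<gamma> *\<^sub>Q (T \<cdot>\<^sub>Q H)) = X \<cdot>\<^sub>Q (qF \<cdot>\<^sub>Q Q) -\<^sub>Q \<gamma> *\<^sub>Q (qF \<cdot>\<^sub>Q (X \<cdot>\<^sub>Q Q))"
    by (simp add: qmul_sub_right qmul_scale_right QHY QTY QT QH)
  have M: "X \<cdot>\<^sub>Q (qF \<cdot>\<^sub>Q Q) -\<^sub>Q \<gamma> *\<^sub>Q (qF \<cdot>\<^sub>Q (X \<cdot>\<^sub>Q Q)) =
     Q +\<^sub>Q \<eta> *\<^sub>Q (qF \<cdot>\<^sub>Q Q) +\<^sub>Q \<theta> *\<^sub>Q (X \<cdot>\<^sub>Q Q) +\<^sub>Q \<sigma> *\<^sub>Q (qF \<cdot>\<^sub>Q (qF \<cdot>\<^sub>Q Q)) +\<^sub>Q \<tau> *\<^sub>Q (X \<cdot>\<^sub>Q (X \<cdot>\<^sub>Q Q))"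
    using arg_cong[OF hX2, of "\<lambda>Z. Z \<cdot>\<^sub>Q Q"]
    by (simp add: qmul_add_left qmul_sub_left qmul_scale_left qmul_assoc qmul_E_left)
  have N: "Q \<cdot>\<^sub>Q (qE +\<^sub>Q \<theta> *\<^sub>Q H +\<^sub>Q \<eta> *\<^sub>Q T +\<^sub>Q \<tau> *\<^sub>Q (H \<cdot>\<^sub>Q H) +\<^sub>Q \<sigma> *\<^sub>Q (T \<cdot>\<^sub>Q T)) =
     Q +\<^sub>Q \<theta> *\<^sub>Q (X \<cdot>\<^sub>Q Q) +\<^sub>Q \<eta> *\<^sub>Q (qF \<cdot>\<^sub>Q Q) +\<^sub>Q \<tau> *\<^sub>Q (X \<cdot>\<^sub>Q (X \<cdot>\<^sub>Q Q)) +\<^sub>Q \<sigma> *\<^sub>Q (qF \<cdot>\<^sub>Q (qF \<cdot>\<^sub>Q Q))"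
    by (simp add: qmul_add_right qmul_scale_right qmul_E_right QHY QTY QH QT)
  have "Q \<cdot>\<^sub>Q (H \<cdot>\<^sub>Q T -\<^sub>Q \<gamma> *\<^sub>Q (T \<cdot>\<^sub>Q H)) =
      Q \<cdot>\<^sub>Q (qE +\<^sub>Q \<theta> *\<^sub>Q H +\<^sub>Q \<eta> *\<^sub>Q T +\<^sub>Q \<tau> *\<^sub>Q (H \<cdot>\<^sub>Q H) +\<^sub>Q \<sigma> *\<^sub>Q (T \<cdot>\<^sub>Q T))"
    unfolding L M N by (simp add: fun_eq_iff qadd_def add_ac)
  then have fin: "H \<cdot>\<^sub>Q T -\<^sub>Q \<gamma> *\<^sub>Q (T \<cdot>\<^sub>Q H) =
      qE +\<^sub>Q \<theta> *\<^sub>Q H +\<^sub>Q \<eta> *\<^sub>Q T +\<^sub>Q \<tau> *\<^sub>Q (H \<cdot>\<^sub>Q H) +\<^sub>Q \<sigma> *\<^sub>Q (T \<cdot>\<^sub>Q T)"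
    by (rule qmul_cancel[rotated]) (use deg[of 0 t] assms(3) in \<open>simp add: Q_def\<close>)
  show ?thesis using fin unfolding Let_def H_def T_def .
qed

end
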